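(* Let $G$ be a gradual mechanism implementing an SCF $f$ that has no SPL opportunity, and let $G'$ be obtained from $G$ through a COA or through an inverse ILL. Then $G'$ has no SPL opportunity.
   Context: Setting. $N$ finite set of agents, $X$ finite set of outcomes, finite type spaces $\Theta_i$; $\Theta=\prod_i\Theta_i$; an SCF is $f:\Theta\to X$. Dynamic game forms. A dynamic game form with perfect recall consists of a finite tree $\bar H$ of histories (finite sequences of action profiles) containing the empty initial history $\varnothing$, closed under prefixes ($\preceq$ prefix order, $\prec$ strict); terminal histories $Z$, non-terminal $H$; at each $h\in H$ a nonempty set $\mathbb P(h)$ of agents move simultaneously with available actions $A_i(h)$, all action profiles leading to successors; $\mathbb P(\varnothing)=N$; each agent's decision nodes $H_i$ are partitioned into information sets $\boldsymbol H_i$, with available actions constant on information sets ($A(\boldsymbol h_i)$) and perfect recall; $\mathcal X:Z\to X$. For information sets of $i$, $\boldsymbol h_i\preceq\bar{\boldsymbol h}_i$ if $h\preceq\bar h$ for some $h\in\boldsymbol h_i,\bar h\in\bar{\boldsymbol h}_i$; $\sigma_{a_i}(\boldsymbol h_i)$ is the set of immediate successor information sets of $i$ reached after $i$ chooses $a_i$ at $\boldsymbol h_i$; for a history $\bar h$, $\boldsymbol h_i\prec\bar h$ means $h\prec\bar h$ for some $h\in\boldsymbol h_i$. Gradual mechanisms. A GM implementing $f$ is such a game form in which (1) actions of $i$ are nonempty subsets of $\Theta_i$; (2) at every $h\in H_i$ the available actions of $i$ are pairwise disjoint with union $\Theta_i(h)$, where for any history $h$, $\Theta_i(h)$ is the last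 action of $i$ in $h$ ($\Theta_i$ if $i$ has not acted); (3) $\mathcal X(z)=f(\theta)$ for all $z\in Z$, $\theta\in\Theta(z)=\prod_i\Theta_i(z)$. $\Theta_{-i}(\boldsymbol h_i)=\bigcup_{h\in\boldsymbol h_i}\prod_{j\ne i}\Theta_j(h)$. SPL opportunity. A GM has an SPL opportunity if there exist an agent $i$, an information set $\boldsymbol h_i$ and $a_i\in A(\boldsymbol h_i)$ with $|a_i|\ge 2$ such that $\{z\in Z:\boldsymbol h_i\prec z,\ \Theta_i(z)=a_i\}\ne\varnothing$ (a splitting then appends, at each such $z$, a move of $i$ alone choosing between the two parts of a partition of $a_i$). Coalescing (COA). Given information sets $\boldsymbol h_i,\bar{\boldsymbol h}_i$ of $i$ and $a_i\in A(\boldsymbol h_i)$ with $\bar{\boldsymbol h}_i\in\sigma_{a_i}(\boldsymbol h_i)$ and $\Theta_{-i}(\boldsymbol h_i)=\Theta_{-i}(\bar{\boldsymbol h}_i)$: agent $i$'s move at $\bar{\boldsymbol h}_i$ is deleted and at $\boldsymbol h_i$ agent $i$ instead chooses from $(A(\boldsymbol h_i)\setminus\{a_i\})\cup A(\bar{\boldsymbol h}_i)$; every history through $\boldsymbol h_i$ with $i$ choosing $a_i$ is replaced by the corresponding histories in which $i$ chooses some $\bar a_i\in A(\bar{\boldsymbol h}_i)$ at $\boldsymbol h_i$ (if $\bar{\boldsymbol h}_i$ is reached, $\bar a_i$ is the action taken there; otherwise one copy per $\bar a_i$), with other agents' moves, information sets (except the deleted $\bar{\boldsymbol h}_i$) and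 outcomes carried over. Illuminating (ILL). Given an information set $\boldsymbol h_i$ and a partition $\{\boldsymbol h_i^1,\boldsymbol h_i^2\}$ of it into nonempty sets: keep histories, other agents' information sets and outcomes; replace every information set $\bar{\boldsymbol h}_i$ of $i$ with $\boldsymbol h_i\preceq\bar{\boldsymbol h}_i$ by the nonempty sets among $\bar{\boldsymbol h}_i^k=\{\bar h\in\bar{\boldsymbol h}_i:\exists h\in\boldsymbol h_i^k,\ h\preceq\bar h\}$, $k=1,2$. An inverse ILL transforms $G$ into $G'$ whenever an ILL transforms $G'$ into $G$. *)

theory Defs
  imports Main "HOL-Library.Sublist" "HOL-Library.Disjoint_Sets" "HOL-Library.FuncSet"
begin

text \<open>Agents form the finite type 'i (so N = UNIV); all types of all agents live in one
type 't, agent j's type space being Th j.  An action of an agent is a set of types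
('t set).  An action profile at a history is a partial map: p j = Some s iff j moves and
chooses s; p j = None iff j does not move.\<close>

type_synonym ('i,'t) profile = "'i \<Rightarrow> 't set option"
type_synonym ('i,'t) history = "('i,'t) profile list"

datatype ('i,'t,'x) gform = GF
  (tree: "('i,'t) history set")
  (infos: "'i \<Rightarrow> ('i,'t) history set set")
  (outcome: "('i,'t) history \<Rightarrow> 'x")

definition children :: "('i,'t,'x) gform \<Rightarrow> ('i,'t) history \<Rightarrow> ('i,'t) profile set" where
  "children G h = {p. h @ [p] \<in> tree G}"

definition nonterm_hist :: "('i,'t,'x) gform \<Rightarrow> ('i,'t) history set" where
  "nonterm_hist G = {h \<in> tree G. children G h \<noteq> {}}"

definition terminal :: "('i,'t,'x) gform \<Rightarrow> ('i,'t) history set" where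
  "terminal G = {h \<in> tree G. children G h = {}}"

definition movers :: "('i,'t,'x) gform \<Rightarrow> ('i,'t) history \<Rightarrow> 'i set" where
  "movers G h = {j. \<exists>p \<in> children G h. p j \<noteq> None}"

definition acts :: "('i,'t,'x) gform \<Rightarrow> 'i \<Rightarrow> ('i,'t) history \<Rightarrow> 't set set" where
  "acts G j h = {s. \<exists>p \<in> children G h. p j = Some s}"

definition dec :: "('i,'t,'x) gform \<Rightarrow> 'i \<Rightarrow> ('i,'t) history set" where
  "dec G j = {h \<in> nonterm_hist G. j \<in> movers G h}"

text \<open>available actions at an information set (they are constant on it)\<close>
definition actsI :: "('i,'t,'x) gform \<Rightarrow> 'i \<Rightarrow> ('i,'t) history set \<Rightarrow> 't set set" where
  "actsI G j I = (\<Union>h\<in>I. acts G j h)"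

definition iset :: "('i,'t,'x) gform \<Rightarrow> 'i \<Rightarrow> ('i,'t) history \<Rightarrow> ('i,'t) history set" where
  "iset G j h = (THE I. I \<in> infos G j \<and> h \<in> I)"

definition exper :: "('i,'t,'x) gform \<Rightarrow> 'i \<Rightarrow> ('i,'t) history
    \<Rightarrow> (('i,'t) history set \<times> 't set) list" where
  "exper G j h = [(iset G j (take k h), the ((h ! k) j)). k \<leftarrow> [0..<length h], (h ! k) j \<noteq> None]"

definition game_form :: "('i,'t,'x) gform \<Rightarrow> bool" where
  "game_form G \<longleftrightarrow>
     finite (tree G) \<and> [] \<in> tree G \<and>
     (\<forall>g \<in> tree G. \<forall>h. prefix h g \<longrightarrow> h \<in> tree G) \<and>
     (\<forall>h \<in> nonterm_hist G. movers G h \<noteq> {} \<and>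
        children G h = {p. (\<forall>j. j \<in> movers G h \<longleftrightarrow> p j \<noteq> None) \<and>
                           (\<forall>j s. p j = Some s \<longrightarrow> s \<in> acts G j h)}) \<and>
     [] \<in> nonterm_hist G \<and> movers G [] = UNIV \<and>
     (\<forall>j. partition_on (dec G j) (infos G j)) \<and>
     (\<forall>j. \<forall>I \<in> infos G j. \<forall>h \<in> I. \<forall>h' \<in> I. acts G j h = acts G j h') \<and>
     (\<forall>j. \<forall>I \<in> infos G j. \<forall>h \<in> I. \<forall>h' \<in> I. exper G j h = exper G j h')"

definition th_at :: "('i \<Rightarrow> 't set) \<Rightarrow> 'i \<Rightarrow> ('i,'t) history \<Rightarrow> 't set" where
  "th_at Th j h = (case filter (\<lambda>p. p j \<noteq> None) h of [] \<Rightarrow> Th j | ps \<Rightarrow> the (last ps j))"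

definition gm :: "('i \<Rightarrow> 't set) \<Rightarrow> (('i \<Rightarrow> 't) \<Rightarrow> 'x) \<Rightarrow> ('i,'t,'x) gform \<Rightarrow> bool" where
  "gm Th f G \<longleftrightarrow> game_form G \<and>
     (\<forall>j. \<forall>h \<in> dec G j. (\<forall>s \<in> acts G j h. s \<noteq> {} \<and> s \<subseteq> Th j) \<and>
          disjoint (acts G j h) \<and> \<Union>(acts G j h) = th_at Th j h) \<and>
     (\<forall>z \<in> terminal G. \<forall>\<theta>. (\<forall>j. \<theta> j \<in> th_at Th j z) \<longrightarrow> outcome G z = f \<theta>)"

text \<open>Theta_{-i}(I), profiles of the other agents (coordinate i fixed to undefined)\<close>
definition theta_minus :: "('i \<Rightarrow> 't set) \<Rightarrow> 'i \<Rightarrow> ('i,'t) history set \<Rightarrow> ('i \<Rightarrow> 't) set" where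
  "theta_minus Th i I = (\<Union>h\<in>I. PiE (UNIV - {i}) (\<lambda>j. th_at Th j h))"

definition has_spl :: "('i \<Rightarrow> 't set) \<Rightarrow> ('i,'t,'x) gform \<Rightarrow> bool" where
  "has_spl Th G \<longleftrightarrow> (\<exists>i I s. I \<in> infos G i \<and> s \<in> actsI G i I \<and> card s \<ge> 2 \<and>
      (\<exists>z \<in> terminal G. (\<exists>h \<in> I. strict_prefix h z) \<and> th_at Th i z = s))"

definition succ_is :: "('i,'t,'x) gform \<Rightarrow> 'i \<Rightarrow> ('i,'t) history set \<Rightarrow> 't set
    \<Rightarrow> ('i,'t) history set set" where
  "succ_is G i I a = {J \<in> infos G i. \<exists>h \<in> I. \<exists>p r. h @ p # r \<in> J \<and> p i = Some a \<and>
       (\<forall>k < length r. (r ! k) i = None)}"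

definition drop_mv :: "'i \<Rightarrow> ('i,'t) profile \<Rightarrow> ('i,'t) history" where
  "drop_mv i q = (if \<forall>j. j \<noteq> i \<longrightarrow> q j = None then [] else [q(i := None)])"

text \<open>the histories of the coalesced game corresponding to a history g of G\<close>
definition coa_img :: "('i,'t,'x) gform \<Rightarrow> 'i \<Rightarrow> ('i,'t) history set \<Rightarrow> 't set
    \<Rightarrow> ('i,'t) history set \<Rightarrow> ('i,'t) history \<Rightarrow> ('i,'t) history set" where
  "coa_img G i I a J g =
    (if \<exists>h p r. h \<in> I \<and> g = h @ p # r \<and> p i = Some a then
       {h @ (p(i := Some b)) # r1 @ drop_mv i q @ r2 | h p r1 q r2 b.
          h \<in> I \<and> g = h @ p # r1 @ q # r2 \<and> p i = Some a \<and> h @ p # r1 \<in> J \<and> q i = Some b}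
       \<union> {h @ (p(i := Some b)) # r | h p r b.
          h \<in> I \<and> g = h @ p # r \<and> p i = Some a \<and> b \<in> actsI G i J \<and>
          (\<forall>r1 q r2. r = r1 @ q # r2 \<longrightarrow> h @ p # r1 \<notin> J)}
     else {g})"

definition coa :: "('i \<Rightarrow> 't set) \<Rightarrow> ('i,'t,'x) gform \<Rightarrow> ('i,'t,'x) gform \<Rightarrow> bool" where
  "coa Th G G' \<longleftrightarrow> game_form G \<and>
    (\<exists>i I a J. I \<in> infos G i \<and> a \<in> actsI G i I \<and> J \<in> succ_is G i I a \<and>
       theta_minus Th i I = theta_minus Th i J \<and>
       tree G' = (\<Union>g \<in> tree G. coa_img G i I a J g) \<and>
       (\<forall>j. infos G' j = (\<lambda>K. \<Union>g\<in>K. coa_img G i I a J g) `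
                          (if j = i then infos G i - {J} else infos G j)) \<and>
       (\<forall>z \<in> terminal G. \<forall>z' \<in> coa_img G i I a J z. outcome G' z' = outcome G z))"

definition is_le :: "('i,'t) history set \<Rightarrow> ('i,'t) history set \<Rightarrow> bool" where
  "is_le I K \<longleftrightarrow> (\<exists>h \<in> I. \<exists>h' \<in> K. prefix h h')"

definition ill_part :: "('i,'t) history set \<Rightarrow> ('i,'t) history set \<Rightarrow> ('i,'t) history set" where
  "ill_part K Ik = {g \<in> K. \<exists>h \<in> Ik. prefix h g}"

definition ill :: "('i,'t,'x) gform \<Rightarrow> ('i,'t,'x) gform \<Rightarrow> bool" where
  "ill G G' \<longleftrightarrow> game_form G \<and>
    (\<exists>i I I1 I2. I \<in> infos G i \<and> I1 \<noteq> {} \<and> I2 \<noteq> {} \<and> I1 \<inter> I2 = {} \<and> I1 \<union> I2 = I \<and>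
       tree G' = tree G \<and> outcome G' = outcome G \<and>
       (\<forall>j. j \<noteq> i \<longrightarrow> infos G' j = infos G j) \<and>
       infos G' i = {K \<in> infos G i. \<not> is_le I K} \<union>
         {K'. \<exists>K \<in> infos G i. is_le I K \<and> K' \<noteq> {} \<and>
               (K' = ill_part K I1 \<or> K' = ill_part K I2)})"

end

theory Submission imports Defs begin

abbreviation F :: "'i \<Rightarrow> ('i,'t) history \<Rightarrow> ('i,'t) history" where
  "F j x \<equiv> filter (\<lambda>p. p j \<noteq> None) x"

definition V :: "'i \<Rightarrow> ('i,'t) history \<Rightarrow> 't set list" where
  "V j x = map (\<lambda>p. the (p j)) (F j x)"

lemma V_simps[simp]: "V j [] = []" "V j (x @ y) = V j x @ V j y"
  "V j (p # r) = (if p j = None then V j r else the (p j) # V j r)"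
  by (auto simp: V_def)

lemma V_empty_iff: "(V j x = []) = (F j x = [])" by (simp add: V_def)

lemma th_at_V: "th_at Th j x = (if V j x = [] then Th j else last (V j x))"
proof (cases "F j x")
  case Nil
  then show ?thesis by (simp add: th_at_def V_def)
next
  case (Cons q qs)
  then have "last (V j x) = the (last (F j x) j)" by (simp add: V_def last_map)
  then show ?thesis using Cons by (simp add: th_at_def V_def)
qed

lemma cmp: "[f k. k \<leftarrow> xs, P k] = map f (filter P xs)"
  by (induct xs) auto

lemma cnt: "length (exper G j x) = length (F j x)"
proof -
  have "length (exper G j x) = length (filter (\<lambda>k. (x ! k) j \<noteq> None) [0..<length x])"
    unfolding exper_def cmp by simp
  also have "\<dots> = length (filter (\<lambda>p. p j \<noteq> None) (map (nth x) [0..<length x]))"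
    by (simp add: filter_map o_def)
  also have "\<dots> = length (F j x)" by (simp add: map_nth)
  finally show ?thesis .
qed

lemma gf_prefix: "game_form G \<Longrightarrow> g \<in> tree G \<Longrightarrow> prefix h g \<Longrightarrow> h \<in> tree G"
  by (auto simp: game_form_def)

lemma gf_part: "game_form G \<Longrightarrow> partition_on (dec G j) (infos G j)"
  by (auto simp: game_form_def)

lemma gf_acts: "game_form G \<Longrightarrow> I \<in> infos G j \<Longrightarrow> h \<in> I \<Longrightarrow> h' \<in> I \<Longrightarrow> acts G j h = acts G j h'"
  unfolding game_form_def by blast

lemma gf_exper: "game_form G \<Longrightarrow> I \<in> infos G j \<Longrightarrow> h \<in> I \<Longrightarrow> h' \<in> I \<Longrightarrow> exper G j h = exper G j h'"
  unfolding game_form_def by blast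

lemma gf_cnt: "game_form G \<Longrightarrow> I \<in> infos G j \<Longrightarrow> h \<in> I \<Longrightarrow> h' \<in> I \<Longrightarrow> length (F j h) = length (F j h')"
proof -
  assume a: "game_form G" "I \<in> infos G j" "h \<in> I" "h' \<in> I"
  have "length (exper G j h) = length (exper G j h')" using gf_exper[OF a] by simp
  then show ?thesis by (simp only: cnt)
qed

lemma info_dec: "game_form G \<Longrightarrow> I \<in> infos G j \<Longrightarrow> h \<in> I \<Longrightarrow> h \<in> dec G j"
  using gf_part[of G j] unfolding partition_on_def by blast

lemma dec_info: "game_form G \<Longrightarrow> h \<in> dec G j \<Longrightarrow> \<exists>I \<in> infos G j. h \<in> I"
  using gf_part[of G j] unfolding partition_on_def by blast

lemma dec_of_child: "game_form G \<Longrightarrow> x @ [p] \<in> tree G \<Longrightarrow> p j \<noteq> None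
   \<Longrightarrow> x \<in> dec G j \<and> the (p j) \<in> acts G j x"
proof -
  assume g: "game_form G" and t: "x @ [p] \<in> tree G" and pj: "p j \<noteq> None"
  have "x \<in> tree G" using gf_prefix[OF g t, of x] by simp
  moreover have "p \<in> children G x" using t by (simp add: children_def)
  ultimately show ?thesis using pj
    by (auto simp: dec_def nonterm_hist_def movers_def acts_def)
qed

lemma last_move: "F j z \<noteq> [] \<Longrightarrow> \<exists>x p y. z = x @ p # y \<and> p j \<noteq> None \<and> F j y = [] \<and> th_at Th j z = the (p j)"
proof -
  assume "F j z \<noteq> []"
  then have "F j (rev z) \<noteq> []" by (simp add: rev_filter[symmetric])
  then obtain q qs where "F j (rev z) = q # qs" by (cases "F j (rev z)") auto
  then obtain us vs where rz: "rev z = us @ q # vs" and us: "\<forall>u\<in>set us. u j = None" and q: "q j \<noteq> None"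
    by (auto simp: filter_eq_Cons_iff)
  have z: "z = rev vs @ q # rev us" using rz by (metis rev_append rev_rev_ident append_assoc rev.simps append_Cons append_Nil)
  have Fu: "F j (rev us) = []" using us by (auto simp: filter_empty_conv)
  then have "V j (rev us) = []" by (simp add: V_empty_iff)
  then have "th_at Th j z = the (q j)" using z q by (auto simp: th_at_V)
  then show ?thesis using z q Fu by blast
qed

lemma gf_children: "game_form G \<Longrightarrow> h \<in> nonterm_hist G \<Longrightarrow> children G h = {p. (\<forall>j. j \<in> movers G h \<longleftrightarrow> p j \<noteq> None) \<and>
                           (\<forall>j s. p j = Some s \<longrightarrow> s \<in> acts G j h)}"
  unfolding game_form_def by (elim conjE) (drule bspec, assumption, elim conjE, assumption)

lemma gf_root: "game_form G \<Longrightarrow> [] \<in> nonterm_hist G \<and> movers G [] = UNIV"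
  unfolding game_form_def by (elim conjE) (intro conjI)

lemma gf_root_move: "game_form G \<Longrightarrow> z \<in> terminal G \<Longrightarrow> F j z \<noteq> []"
proof -
  assume g: "game_form G" and z: "z \<in> terminal G"
  have r: "[] \<in> nonterm_hist G" "movers G [] = UNIV" using gf_root[OF g] by auto
  then have "z \<noteq> []" using z unfolding terminal_def nonterm_hist_def by auto
  then obtain p0 rest where zz: "z = p0 # rest" by (cases z) auto
  have zt: "z \<in> tree G" using z by (simp add: terminal_def)
  have "prefix [p0] z" using zz by simp
  then have "[p0] \<in> tree G" using gf_prefix[OF g zt] by blast
  then have c: "p0 \<in> children G []" by (simp add: children_def)
  then have "p0 j \<noteq> None" using gf_children[OF g r(1)] r(2) by blast
  then show ?thesis using zz by simp
qed

lemma spl_of_terminal: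
  assumes gm: "gm Th f G" and z: "z \<in> terminal G" and c: "2 \<le> card (th_at Th j z)"
  shows "has_spl Th G"
proof -
  have g: "game_form G" using gm by (simp add: gm_def)
  obtain x p y where zz: "z = x @ p # y" and pj: "p j \<noteq> None" and th: "th_at Th j z = the (p j)"
    using last_move[OF gf_root_move[OF g z]] by blast
  have zt: "z \<in> tree G" using z by (simp add: terminal_def)
  have pr: "prefix (x @ [p]) z" using zz by simp
  have xp: "x @ [p] \<in> tree G" using gf_prefix[OF g zt pr] .
  have xd: "x \<in> dec G j" and sa: "the (p j) \<in> acts G j x" using dec_of_child[OF g xp pj] by auto
  obtain I where I: "I \<in> infos G j" "x \<in> I" using dec_info[OF g xd] by blast
  have sI: "the (p j) \<in> actsI G j I" using I sa unfolding actsI_def by blast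
  have sp: "strict_prefix x z" using zz by (rule strict_prefixI')
  have c2: "2 \<le> card (the (p j))" using c th by simp
  show ?thesis unfolding has_spl_def
    apply (rule exI[of _ j], rule exI[of _ I], rule exI[of _ "the (p j)"])
    using I sI c2 z sp th by blast
qed

lemma th_sub_Th:
  assumes gm: "gm Th f G" and z: "z \<in> tree G"
  shows "th_at Th j z \<subseteq> Th j"
proof (cases "F j z = []")
  case True
  then show ?thesis by (simp add: th_at_V V_empty_iff)
next
  case False
  have g: "game_form G" using gm by (simp add: gm_def)
  obtain x p y where zz: "z = x @ p # y" and pj: "p j \<noteq> None" and th: "th_at Th j z = the (p j)"
    using last_move[OF False] by blast
  have "x @ [p] \<in> tree G" using gf_prefix[OF g, of z "x @ [p]"] z zz by simp
  from dec_of_child[OF g this pj] have "x \<in> dec G j" and sa: "the (p j) \<in> acts G j x" by auto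
  then have "\<forall>s \<in> acts G j x. s \<noteq> {} \<and> s \<subseteq> Th j" using gm unfolding gm_def by blast
  then show ?thesis using th sa by auto
qed

lemma coa_first:
  assumes "h \<in> I" "g = h @ p # r1 @ q # r2" "p i = Some a" "h @ p # r1 \<in> J" "q i = Some b"
  shows "h @ (p(i := Some b)) # r1 @ drop_mv i q @ r2 \<in> coa_img G i I a J g"
proof -
  have c: "\<exists>h p r. h \<in> I \<and> g = h @ p # r \<and> p i = Some a" using assms by blast
  show ?thesis unfolding coa_img_def if_P[OF c] using assms by blast
qed

lemma coa_second:
  assumes "h \<in> I" "g = h @ p # r" "p i = Some a" "b \<in> actsI G i J"
    "\<forall>r1 q r2. r = r1 @ q # r2 \<longrightarrow> h @ p # r1 \<notin> J"
  shows "h @ (p(i := Some b)) # r \<in> coa_img G i I a J g"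
proof -
  have c: "\<exists>h p r. h \<in> I \<and> g = h @ p # r \<and> p i = Some a" using assms by blast
  show ?thesis unfolding coa_img_def if_P[OF c] using assms by blast
qed

lemma coa_none: "\<not> (\<exists>h p r. h \<in> I \<and> g = h @ p # r \<and> p i = Some a) \<Longrightarrow> coa_img G i I a J g = {g}"
  unfolding coa_img_def by (rule if_not_P)

lemma coa_cases:
  assumes "x \<in> coa_img G i I a J g"
  obtains (A) "\<not> (\<exists>h p r. h \<in> I \<and> g = h @ p # r \<and> p i = Some a)" "x = g"
  | (B) h p r1 q r2 b where "h \<in> I" "g = h @ p # r1 @ q # r2" "p i = Some a" "h @ p # r1 \<in> J" "q i = Some b"
      "x = h @ (p(i := Some b)) # r1 @ drop_mv i q @ r2"
  | (C) h p r b where "h \<in> I" "g = h @ p # r" "p i = Some a" "b \<in> actsI G i J"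
    "\<forall>r1 q r2. r = r1 @ q # r2 \<longrightarrow> h @ p # r1 \<notin> J" "x = h @ (p(i := Some b)) # r"
proof (cases "\<exists>h p r. h \<in> I \<and> g = h @ p # r \<and> p i = Some a")
  case True
  then show ?thesis using assms that(2,3) unfolding coa_img_def if_P[OF True] by blast
next
  case False
  then show ?thesis using assms that(1) by (simp add: coa_none)
qed

lemma V_upd: "j \<noteq> i \<Longrightarrow> V j ((p(i := c)) # r) = V j (p # r)"
  by simp

lemma V_drop: "j \<noteq> i \<Longrightarrow> V j (drop_mv i q) = V j [q]"
  by (auto simp: drop_mv_def)

lemma V_drop_i: "V i (drop_mv i q) = []"
  by (auto simp: drop_mv_def)

lemma th_eqV: "V j x = V j y \<Longrightarrow> th_at Th j x = th_at Th j y"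
  by (simp add: th_at_V)

lemma snoc_split: "r @ [q'] = r1 @ q # r2 \<Longrightarrow> (r1 = r \<and> r2 = [] \<and> q = q') \<or> (\<exists>r2'. r = r1 @ q # r2')"
  by (cases r2 rule: rev_cases) auto

lemma terminalI: "g \<in> tree G \<Longrightarrow> (\<And>q. g @ [q] \<in> tree G \<Longrightarrow> False) \<Longrightarrow> g \<in> terminal G"
  by (auto simp: terminal_def children_def)

lemma coa_key:
  assumes gm: "gm Th f G" and I: "I \<in> infos G i" and J: "J \<in> succ_is G i I a"
    and tr: "tree G' = (\<Union>g \<in> tree G. coa_img G i I a J g)" and z': "z' \<in> terminal G'"
  shows "\<exists>z \<in> terminal G. \<forall>j. th_at Th j z' \<subseteq> th_at Th j z"
proof -
  have g: "game_form G" using gm by (simp add: gm_def)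
  obtain h0 p0 r0 where JI: "J \<in> infos G i" and w: "h0 @ p0 # r0 \<in> J" and h0: "h0 \<in> I"
    and p0: "p0 i = Some a" and r0: "\<forall>k < length r0. (r0 ! k) i = None"
    using J unfolding succ_is_def by blast
  have Fr0: "F i r0 = []" using r0 by (auto simp: filter_empty_conv in_set_conv_nth)
  have PR: "F i r = []" if "h \<in> I" "h @ p # r \<in> J" "p i \<noteq> None" for h p r
  proof -
    have "length (F i h) = length (F i h0)" using gf_cnt[OF g I that(1) h0] .
    moreover have "length (F i (h @ p # r)) = length (F i (h0 @ p0 # r0))" using gf_cnt[OF g JI that(2) w] .
    ultimately show ?thesis using that(3) p0 Fr0 by simp
  qed
  have wd: "h0 @ p0 # r0 \<in> dec G i" using info_dec[OF g JI w] .
  have Vr0: "V i r0 = []" using Fr0 by (simp add: V_empty_iff)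
  have thw: "th_at Th i (h0 @ p0 # r0) = a" using Vr0 p0 by (simp add: th_at_V)
  have bsub: "b \<subseteq> a" if bi: "b \<in> actsI G i J" for b
  proof -
    obtain x where "x \<in> J" "b \<in> acts G i x" using bi unfolding actsI_def by blast
    then have "b \<in> acts G i (h0 @ p0 # r0)" using gf_acts[OF g JI _ w] by blast
    moreover have "\<Union>(acts G i (h0 @ p0 # r0)) = th_at Th i (h0 @ p0 # r0)"
      using gm wd unfolding gm_def by blast
    ultimately show ?thesis using thw by blast
  qed
  have bJ: "b \<in> acts G i x" if bi: "b \<in> actsI G i J" and xJ: "x \<in> J" for b x
  proof -
    obtain y where "y \<in> J" "b \<in> acts G i y" using bi unfolding actsI_def by blast
    then show ?thesis using gf_acts[OF g JI _ xJ] by blast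
  qed
  obtain b0 where b0: "b0 \<in> actsI G i J"
  proof -
    have "i \<in> movers G (h0 @ p0 # r0)" using wd by (simp add: dec_def)
    then obtain p where "p \<in> children G (h0 @ p0 # r0)" "p i \<noteq> None" by (auto simp: movers_def)
    then have "the (p i) \<in> acts G i (h0 @ p0 # r0)" by (auto simp: acts_def)
    then show ?thesis using that w unfolding actsI_def by blast
  qed
  have z't: "z' \<in> tree G'" using z' by (simp add: terminal_def)
  have nt: "z' @ [q] \<notin> coa_img G i I a J g2" if "g2 \<in> tree G" for g2 q
  proof
    assume "z' @ [q] \<in> coa_img G i I a J g2"
    then have "z' @ [q] \<in> tree G'" using tr that by blast
    then show False using z' by (simp add: terminal_def children_def)
  qed
  obtain gg where gg: "gg \<in> tree G" and zin: "z' \<in> coa_img G i I a J gg" using z't tr by blast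
  from zin show ?thesis
  proof (cases rule: coa_cases)
    case A
    have "gg \<in> terminal G"
    proof (rule terminalI[OF gg])
      fix q assume gq: "gg @ [q] \<in> tree G"
      show False
      proof (cases "\<exists>h p r. h \<in> I \<and> gg @ [q] = h @ p # r \<and> p i = Some a")
        case True
        then obtain h p r where hp: "h \<in> I" "gg @ [q] = h @ p # r" "p i = Some a" by blast
        show False
        proof (cases r rule: rev_cases)
          case Nil
          then have "h = gg" "p = q" using hp(2) by auto
          have e: "gg @ [q] = h @ p # []" using hp(2) Nil by simp
          have "h @ (p(i := Some b0)) # [] \<in> coa_img G i I a J (gg @ [q])"
            by (rule coa_second[OF hp(1) e hp(3) b0]) simp
          then show False using nt[OF gq] A(2) \<open>h = gg\<close> by simp
        next
          case (snoc ys y)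
          then have "gg = h @ p # ys" using hp(2) by (metis append_Cons append_assoc butlast_snoc)
          then show False using A(1) hp by blast
        qed
      next
        case False
        then have "gg @ [q] \<in> coa_img G i I a J (gg @ [q])" by (simp add: coa_none)
        then show False using nt[OF gq] A(2) by simp
      qed
    qed
    then show ?thesis using A(2) by blast
  next
    case (B h p r1 q r2 b)
    have Fr1: "F i r1 = []" using PR[OF B(1) B(4)] B(3) by simp
    have "gg \<in> terminal G"
    proof (rule terminalI[OF gg])
      fix q' assume gq: "gg @ [q'] \<in> tree G"
      have e: "gg @ [q'] = h @ p # r1 @ q # (r2 @ [q'])" using B(2) by simp
      have "h @ (p(i := Some b)) # r1 @ drop_mv i q @ (r2 @ [q']) \<in> coa_img G i I a J (gg @ [q'])"
        by (rule coa_first[OF B(1) e B(3) B(4) B(5)])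
      then show False using nt[OF gq] B(6) by simp
    qed
    moreover have "th_at Th j z' \<subseteq> th_at Th j gg" for j
    proof (cases "j = i")
      case True
      have "V i r1 = []" using Fr1 by (simp add: V_empty_iff)
      then show ?thesis using True B(2,3,5,6) by (simp add: th_at_V V_drop_i)
    next
      case False
      have "V j z' = V j gg" using False B(2,6) by (simp add: V_drop)
      then show ?thesis by (simp add: th_at_V)
    qed
    ultimately show ?thesis by blast
  next
    case (C h p r b)
    show ?thesis
    proof (cases "gg \<in> J")
      case False
      have "gg \<in> terminal G"
      proof (rule terminalI[OF gg])
        fix q' assume gq: "gg @ [q'] \<in> tree G"
        have e: "gg @ [q'] = h @ p # (r @ [q'])" using C(2) by simp
        have "h @ (p(i := Some b)) # (r @ [q']) \<in> coa_img G i I a J (gg @ [q'])"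
        proof (rule coa_second[OF C(1) e C(3) C(4)])
          show "\<forall>r1 q r2. r @ [q'] = r1 @ q # r2 \<longrightarrow> h @ p # r1 \<notin> J"
          proof (intro allI impI)
            fix r1 q r2 assume "r @ [q'] = r1 @ q # r2"
            then show "h @ p # r1 \<notin> J" using snoc_split C(5) False C(2) by metis
          qed
        qed
        then show False using nt[OF gq] C(6) by simp
      qed
      moreover have "th_at Th j z' \<subseteq> th_at Th j gg" for j
      proof (cases "j = i")
        case True
        show ?thesis
        proof (cases "V i r = []")
          case True
          then have "th_at Th i z' = b" "th_at Th i gg = a" using C(2,3,6) by (simp_all add: th_at_V)
          then show ?thesis using bsub[OF C(4)] \<open>j = i\<close> by simp
        next
          case False
          then show ?thesis using True C(2,3,6) by (simp add: th_at_V)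
        qed
      next
        case False
        have "V j z' = V j gg" using False C(2,6) by simp
        then show ?thesis by (simp add: th_at_V)
      qed
      ultimately show ?thesis by blast
    next
      case True
      have Fr: "F i r = []" using PR[OF C(1)] True C(2,3) by simp
      have "b \<in> acts G i gg" using bJ[OF C(4) True] .
      then obtain q' where q': "q' \<in> children G gg" "q' i = Some b" by (auto simp: acts_def)
      have gq: "gg @ [q'] \<in> tree G" using q'(1) by (simp add: children_def)
      have e1: "gg @ [q'] = h @ p # r @ q' # []" using C(2) by simp
      have gJ: "h @ p # r \<in> J" using C(2) True by simp
      have "h @ (p(i := Some b)) # r @ drop_mv i q' @ [] \<in> coa_img G i I a J (gg @ [q'])"
        by (rule coa_first[OF C(1) e1 C(3) gJ q'(2)])
      then have dm: "drop_mv i q' = []"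
        using nt[OF gq] C(6) by (cases "drop_mv i q' = []") (auto simp: drop_mv_def split: if_splits)
      then have oth: "\<forall>j. j \<noteq> i \<longrightarrow> q' j = None" by (auto simp: drop_mv_def split: if_splits)
      have "gg @ [q'] \<in> terminal G"
      proof (rule terminalI[OF gq])
        fix q'' assume gq2: "(gg @ [q']) @ [q''] \<in> tree G"
        have e2: "(gg @ [q']) @ [q''] = h @ p # r @ q' # [q'']" using C(2) by simp
        have "h @ (p(i := Some b)) # r @ drop_mv i q' @ [q''] \<in> coa_img G i I a J ((gg @ [q']) @ [q''])"
          by (rule coa_first[OF C(1) e2 C(3) gJ q'(2)])
        then show False using nt[OF gq2] C(6) dm by simp
      qed
      moreover have "th_at Th j z' \<subseteq> th_at Th j (gg @ [q'])" for j
      proof (cases "j = i")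
        case True
        have "V i r = []" using Fr by (simp add: V_empty_iff)
        then show ?thesis using True C(2,3,6) q'(2) by (simp add: th_at_V)
      next
        case False
        have "V j z' = V j (gg @ [q'])" using False C(2,6) oth by simp
        then show ?thesis by (simp add: th_at_V)
      qed
      ultimately show ?thesis by blast
    qed
  qed
qed

theorem mainTheorem12:
  fixes Th :: "'i::finite \<Rightarrow> 't set" and f :: "('i \<Rightarrow> 't) \<Rightarrow> 'x::finite"
    and G G' :: "('i,'t,'x) gform"
  assumes "\<forall>j. finite (Th j)"
    and "gm Th f G"
    and "\<not> has_spl Th G"
    and "coa Th G G' \<or> ill G' G"
  shows "\<not> has_spl Th G'"
proof
  assume "has_spl Th G'"
  then obtain j s z where z: "z \<in> terminal G'" and c0: "2 \<le> card s" and th: "th_at Th j z = s"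
    unfolding has_spl_def
    apply (elim conjE exE bexE)
    apply (rule that)
    by assumption+
  have c: "2 \<le> card (th_at Th j z)" using c0 th by simp
  from assms(4) show False
  proof
    assume "coa Th G G'"
    then obtain i I a J where I: "I \<in> infos G i" and J: "J \<in> succ_is G i I a"
      and tr: "tree G' = (\<Union>g \<in> tree G. coa_img G i I a J g)"
      unfolding coa_def
      apply (elim conjE exE)
      apply (rule that)
      by assumption+
    obtain z0 where z0: "z0 \<in> terminal G" and sub: "\<forall>j. th_at Th j z \<subseteq> th_at Th j z0"
      using coa_key[OF assms(2) I J tr z] by blast
    have "th_at Th j z0 \<subseteq> Th j" using th_sub_Th[OF assms(2)] z0 by (simp add: terminal_def)
    then have "finite (th_at Th j z0)" using assms(1) finite_subset by blast
    then have "card (th_at Th j z) \<le> card (th_at Th j z0)" using sub card_mono by blast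
    then have "2 \<le> card (th_at Th j z0)" using c by simp
    then have "has_spl Th G" using spl_of_terminal[OF assms(2) z0] by blast
    then show False using assms(3) by blast
  next
    assume "ill G' G"
    then have "tree G = tree G'" unfolding ill_def by (elim conjE exE) assumption
    then have "terminal G' = terminal G" by (simp add: terminal_def children_def)
    then have "has_spl Th G" using spl_of_terminal[OF assms(2) _ c] z by simp
    then show False using assms(3) by blast
  qed
qed

end
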